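(* For $i\in\mathbb{Z}_{>0}$ and $\epsilon>0$, the inclusion $j:S^n\times S^n\times\{i\pi+\epsilon\}\to Z_i$ is a homotopy equivalence.
   Context: $S^n$ ($n\ge1$) carries the round metric induced from $\mathbb{R}^{n+1}$, with geodesic distance $\mathrm{dist}$. For $i\in\mathbb{Z}_{>0}$, $Z_i\subset S^n\times S^n\times\mathbb{R}$ is the open set $\{(x,y,t)\mid\mathrm{dist}(x,y)<t-(i-1)\pi\}$ if $i$ is odd and $\{(x,y,t)\mid\mathrm{dist}(x,-y)<t-(i-1)\pi\}$ if $i$ is even. *)

theory Defs
  imports "HOL-Analysis.Analysis"
begin

text \<open>A continuous map f from X to Y is a homotopy equivalence if it has a continuous
  homotopy inverse g (same shape as the library's homotopy_equivalent_space, but for the given f).\<close>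
definition homotopy_equivalence_map ::
  "'a topology \<Rightarrow> 'b topology \<Rightarrow> ('a \<Rightarrow> 'b) \<Rightarrow> bool" where
  "homotopy_equivalence_map X Y f \<longleftrightarrow>
     continuous_map X Y f \<and>
     (\<exists>g. continuous_map Y X g \<and>
          homotopic_with (\<lambda>x. True) X X (g \<circ> f) id \<and>
          homotopic_with (\<lambda>x. True) Y Y (f \<circ> g) id)"

definition sphdist :: "'a::real_inner \<Rightarrow> 'a \<Rightarrow> real" where
  "sphdist x y = arccos (inner x y)"

text \<open>The open sets Z_i in S^n x S^n x R, where S^n = sphere 0 1 in real^'m, n+1 = CARD('m).\<close>
definition Zset :: "nat \<Rightarrow> ((real^'m) \<times> (real^'m) \<times> real) set" where
  "Zset i = {(x, y, t). x \<in> sphere 0 1 \<and> y \<in> sphere 0 1 \<and>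
      (if odd i then sphdist x y else sphdist x (- y)) < t - (real i - 1) * pi}"

end

theory Submission
  imports Defs
begin

lemma sphdist_le_pi:
  fixes x y :: "'a::real_inner"
  assumes "norm x = 1" "norm y = 1"
  shows "sphdist x y \<le> pi"
proof -
  have "\<bar>inner x y\<bar> \<le> 1" using Cauchy_Schwarz_ineq2[of x y] assms by simp
  then show ?thesis unfolding sphdist_def by (intro arccos_ubound) auto
qed

theorem lemma3p1:
  fixes i :: nat and \<epsilon> :: real
  assumes "CARD('m::finite) \<ge> 2"
    and "i > 0" and "\<epsilon> > 0"
  shows "homotopy_equivalence_map
           (top_of_set (sphere (0::real^'m) 1 \<times> sphere (0::real^'m) 1 \<times> {real i * pi + \<epsilon>}))
           (top_of_set (Zset i :: ((real^'m) \<times> (real^'m) \<times> real) set))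
           (\<lambda>p. p)"
proof -
  define c where "c = real i * pi + \<epsilon>"
  define S where "S = (sphere (0::real^'m) 1 \<times> sphere (0::real^'m) 1 \<times> {c})"
  define Z where "Z = (Zset i :: ((real^'m) \<times> (real^'m) \<times> real) set)"
  have SZ: "S \<subseteq> Z"
  proof
    fix p assume "p \<in> S"
    then obtain x y where p: "p = (x,y,c)" "norm x = 1" "norm y = 1" unfolding S_def by auto
    have "sphdist x y \<le> pi" "sphdist x (-y) \<le> pi" using p sphdist_le_pi[of x y] sphdist_le_pi[of x "-y"] by auto
    moreover have "c - (real i - 1) * pi = pi + \<epsilon>" unfolding c_def by (simp add: algebra_simps)
    ultimately show "p \<in> Z" using p assms unfolding Z_def Zset_def by auto
  qed
  define g where "g = (\<lambda>(p::(real^'m) \<times> (real^'m) \<times> real). (fst p, fst (snd p), c))"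
  have gS: "g ` Z \<subseteq> S" unfolding g_def Z_def Zset_def S_def by auto
  have contg: "continuous_on Z g" unfolding g_def by (intro continuous_intros)
  have 1: "continuous_map (top_of_set S) (top_of_set Z) (\<lambda>p. p)"
    using SZ by (auto simp: continuous_map_in_subtopology continuous_on_id)
  have 2: "continuous_map (top_of_set Z) (top_of_set S) g"
    using gS contg by (auto simp: continuous_map_in_subtopology)
  have 3: "homotopic_with (\<lambda>x. True) (top_of_set S) (top_of_set S) (g \<circ> (\<lambda>p. p)) id"
  proof (rule homotopic_with_equal)
    show "continuous_map (top_of_set S) (top_of_set S) (g \<circ> (\<lambda>p. p))"
      using continuous_map_compose[OF 1 2] .
  qed (auto simp: g_def S_def)
  have 4: "homotopic_with (\<lambda>x. True) (top_of_set Z) (top_of_set Z) ((\<lambda>p. p) \<circ> g) id"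
  proof -
    have "homotopic_with_canon (\<lambda>z. True) Z Z g id"
    proof (rule homotopic_with_linear)
      show "continuous_on Z g" by (rule contg)
      show "continuous_on Z id" by (simp add: continuous_on_id)
      fix p assume pZ: "p \<in> Z"
      then obtain x y t where p: "p = (x,y,t)" by (cases p) auto
      show "closed_segment (g p) (id p) \<subseteq> Z"
      proof
        fix q assume "q \<in> closed_segment (g p) (id p)"
        then obtain u where u: "0 \<le> u" "u \<le> 1" "q = (1 - u) *\<^sub>R g p + u *\<^sub>R id p"
          unfolding closed_segment_def by auto
        have q: "q = (x, y, (1-u)*c + u*t)"
          using u(3) p unfolding g_def by (simp add: algebra_simps scaleR_prod_def)
        have gZ: "g p \<in> Z" using gS SZ pZ by auto
        define d where "d = (if odd i then sphdist x y else sphdist x (- y))"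
        have dt: "d < t - (real i - 1) * pi" and xy: "x \<in> sphere 0 1" "y \<in> sphere 0 1"
          using pZ p unfolding Z_def Zset_def d_def by auto
        have dc: "d < c - (real i - 1) * pi"
          using gZ p unfolding Z_def Zset_def d_def g_def by auto
        have "(1-u) * d + u * d < (1-u) * (c - (real i - 1) * pi) + u * (t - (real i - 1) * pi)"
        proof (cases "u = 0")
          case True then show ?thesis using dc by simp
        next
          case False
          then have "u > 0" using u by auto
          then have "u * d < u * (t - (real i - 1) * pi)" using dt by simp
          moreover have "(1-u) * d \<le> (1-u) * (c - (real i - 1) * pi)"
            using dc u by (intro mult_left_mono) auto
          ultimately show ?thesis by linarith
        qed
        then have "d < (1-u)*c + u*t - (real i - 1) * pi" by (simp add: algebra_simps)
        then show "q \<in> Z" using q xy unfolding Z_def Zset_def d_def by auto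
      qed
    qed
    moreover have "(\<lambda>p. p) \<circ> g = g" by (simp add: o_def)
    ultimately show ?thesis by simp
  qed
  show ?thesis
    unfolding homotopy_equivalence_map_def c_def[symmetric] S_def[symmetric] Z_def[symmetric]
    using 1 2 3 4 by blast
qed

end
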